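(* Every conditional space $\mathfrak{X}=\langle X,\tau,T\rangle$ is isomorphic to the expanded Stone space $\langle\mathrm{Ul}(\mathrm{Clop}(\tau)),\tau_s,T_{\mathrm{Clop}(\tau)}\rangle$ of the conditional algebra $\langle\mathrm{Clop}(\tau),\to_T\rangle$, via the map $\varepsilon\colon X\to\mathrm{Ul}(\mathrm{Clop}(\tau))$, $\varepsilon(x)=\{U\in\mathrm{Clop}(\tau):x\in U\}$; that is, $\varepsilon$ is a homeomorphism and for all $x,y\in X$ and $Z\subseteq X$, $T(x,Z,y)$ iff $T_{\mathrm{Clop}(\tau)}(\varepsilon(x),\varepsilon[Z],\varepsilon(y))$.
   Context: A conditional space is a triple $\langle X,\tau,T\rangle$ where $\langle X,\tau\rangle$ is a Boolean (compact, Hausdorff, zero-dimensional) space and $T\subseteq X\times\mathcal{C}(\tau)\times X$ ($\mathcal{C}(\tau)$ the closed sets, $\mathrm{Clop}(\tau)$ the clopen sets) satisfies: (T1) for every $x$ and closed $Y$, $T(x,Y)=\{y:T(x,Y,y)\}$ is closed; (T2) for all clopen $U,V$, $U\to_T V=\{x:\text{for all closed } Z\subseteq U,\ T(x,Z)\subseteq V\}$ is clopen; (T3) for closed $Y$: $T(x,Y,y)$ iff $T(x,U,y)$ for all clopen $U\supseteq Y$. Then $\langle\mathrm{Clop}(\tau),\to_T\rangle$ is a conditional algebra. For a conditional algebra $\langle A,\to\rangle$ (Boolean algebra $A$ with $a\to1=1$, $(a\to b)\wedge(a\to c)=a\to(b\wedge c)$, $(a\vee b)\to c\le(a\to c)\wedge(b\to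 c)$): $\mathrm{Ul}(A)$ is its Stone space with topology $\tau_s$; filters include $A$ itself; $\varphi(F)=\{u:F\subseteq u\}$; $D^{\to}_u(F)=\{b:\exists a\in F,\ a\to b\in u\}$; and $T_A(u,Z,v)$ iff there is a filter $F$ with $Z=\varphi(F)$ and $D^{\to}_u(F)\subseteq v$. *)

theory Defs
  imports "HOL-Analysis.Analysis"
begin

definition boolean_space :: "'a topology \<Rightarrow> bool" where
  "boolean_space \<tau> \<longleftrightarrow> compact_space \<tau> \<and> Hausdorff_space \<tau> \<and> \<tau> dim_le 0"

definition Clop :: "'a topology \<Rightarrow> 'a set set" where
  "Clop \<tau> = {U. closedin \<tau> U \<and> openin \<tau> U}"

definition Tsec :: "('a \<Rightarrow> 'a set \<Rightarrow> 'a \<Rightarrow> bool) \<Rightarrow> 'a \<Rightarrow> 'a set \<Rightarrow> 'a set" where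
  "Tsec T x Y = {y. T x Y y}"

definition arrowT :: "'a topology \<Rightarrow> ('a \<Rightarrow> 'a set \<Rightarrow> 'a \<Rightarrow> bool) \<Rightarrow> 'a set \<Rightarrow> 'a set \<Rightarrow> 'a set" where
  "arrowT \<tau> T U V = {x \<in> topspace \<tau>. \<forall>Z. closedin \<tau> Z \<and> Z \<subseteq> U \<longrightarrow> Tsec T x Z \<subseteq> V}"

definition conditional_space :: "'a topology \<Rightarrow> ('a \<Rightarrow> 'a set \<Rightarrow> 'a \<Rightarrow> bool) \<Rightarrow> bool" where
  "conditional_space \<tau> T \<longleftrightarrow>
     boolean_space \<tau> \<and>
     (\<forall>x Y y. T x Y y \<longrightarrow> x \<in> topspace \<tau> \<and> closedin \<tau> Y \<and> y \<in> topspace \<tau>) \<and>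
     (\<forall>x Y. x \<in> topspace \<tau> \<and> closedin \<tau> Y \<longrightarrow> closedin \<tau> (Tsec T x Y)) \<and>
     (\<forall>U V. U \<in> Clop \<tau> \<and> V \<in> Clop \<tau> \<longrightarrow> arrowT \<tau> T U V \<in> Clop \<tau>) \<and>
     (\<forall>x Y y. closedin \<tau> Y \<longrightarrow>
        (T x Y y \<longleftrightarrow> (\<forall>U. U \<in> Clop \<tau> \<and> Y \<subseteq> U \<longrightarrow> T x U y)))"

text \<open>A Boolean algebra of subsets of X (here Clop tau, top element X, meet = inter).
  Filters (the improper filter A itself is allowed).\<close>
definition is_filter :: "'a set \<Rightarrow> 'a set set \<Rightarrow> 'a set set \<Rightarrow> bool" where
  "is_filter X A F \<longleftrightarrow> F \<subseteq> A \<and> X \<in> F \<and>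
     (\<forall>a b. a \<in> F \<and> b \<in> A \<and> a \<subseteq> b \<longrightarrow> b \<in> F) \<and>
     (\<forall>a b. a \<in> F \<and> b \<in> F \<longrightarrow> a \<inter> b \<in> F)"

definition is_ultrafilter :: "'a set \<Rightarrow> 'a set set \<Rightarrow> 'a set set \<Rightarrow> bool" where
  "is_ultrafilter X A u \<longleftrightarrow> is_filter X A u \<and> u \<noteq> A \<and>
     (\<forall>G. is_filter X A G \<and> G \<noteq> A \<and> u \<subseteq> G \<longrightarrow> G = u)"

definition Ul :: "'a set \<Rightarrow> 'a set set \<Rightarrow> 'a set set set" where
  "Ul X A = {u. is_ultrafilter X A u}"

definition stone_topology :: "'a set \<Rightarrow> 'a set set \<Rightarrow> 'a set set topology" where
  "stone_topology X A = topology_generated_by ((\<lambda>a. {u \<in> Ul X A. a \<in> u}) ` A)"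

definition phi :: "'a set \<Rightarrow> 'a set set \<Rightarrow> 'a set set \<Rightarrow> 'a set set set" where
  "phi X A F = {u \<in> Ul X A. F \<subseteq> u}"

definition Dto :: "'a set set \<Rightarrow> ('a set \<Rightarrow> 'a set \<Rightarrow> 'a set) \<Rightarrow> 'a set set \<Rightarrow> 'a set set \<Rightarrow> 'a set set" where
  "Dto A imp u F = {b \<in> A. \<exists>a \<in> F. imp a b \<in> u}"

definition T_alg :: "'a set \<Rightarrow> 'a set set \<Rightarrow> ('a set \<Rightarrow> 'a set \<Rightarrow> 'a set)
    \<Rightarrow> 'a set set \<Rightarrow> 'a set set set \<Rightarrow> 'a set set \<Rightarrow> bool" where
  "T_alg X A imp u Z v \<longleftrightarrow> (\<exists>F. is_filter X A F \<and> Z = phi X A F \<and> Dto A imp u F \<subseteq> v)"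

definition eps :: "'a topology \<Rightarrow> 'a \<Rightarrow> 'a set set" where
  "eps \<tau> x = {U \<in> Clop \<tau>. x \<in> U}"

end

theory Submission
  imports Defs
begin

lemma clop_nbhd:
  assumes "boolean_space \<tau>" "openin \<tau> W" "x \<in> W"
  shows "\<exists>V. V \<in> Clop \<tau> \<and> x \<in> V \<and> V \<subseteq> W"
proof -
  have "\<tau> dim_le 0" using assms(1) unfolding boolean_space_def by simp
  then have nb: "neighbourhood_base_of (\<lambda>U. closedin \<tau> U \<and> openin \<tau> U) \<tau>"
    by (simp only: dimension_le_0_neighbourhood_base_of_clopen)
  have "\<exists>U V. openin \<tau> U \<and> (closedin \<tau> V \<and> openin \<tau> V) \<and> x \<in> U \<and> U \<subseteq> V \<and> V \<subseteq> W"
    using nb assms(2,3) unfolding neighbourhood_base_of by blast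
  then obtain U V where "closedin \<tau> V \<and> openin \<tau> V" "x \<in> U" "U \<subseteq> V" "V \<subseteq> W"
    by blast
  then show ?thesis unfolding Clop_def by blast
qed

lemma clop_sub: "U \<in> Clop \<tau> \<Longrightarrow> U \<subseteq> topspace \<tau>"
  unfolding Clop_def by (auto dest: closedin_subset)

lemma clop_sep_pt:
  assumes "boolean_space \<tau>" "z \<in> topspace \<tau>" "y \<in> topspace \<tau>" "z \<noteq> y"
  shows "\<exists>V. V \<in> Clop \<tau> \<and> z \<in> V \<and> y \<notin> V"
proof -
  have "Hausdorff_space \<tau>" using assms(1) unfolding boolean_space_def by blast
  then obtain U U' where "openin \<tau> U" "openin \<tau> U'" "z \<in> U" "y \<in> U'" "disjnt U U'"
    using assms unfolding Hausdorff_space_def by blast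
  then obtain V where "V \<in> Clop \<tau>" "z \<in> V" "V \<subseteq> U"
    using clop_nbhd[OF assms(1)] by blast
  then show ?thesis using \<open>y \<in> U'\<close> \<open>disjnt U U'\<close> by (auto simp: disjnt_def)
qed

lemma clop_sep:
  assumes "boolean_space \<tau>" "closedin \<tau> C" "y \<in> topspace \<tau>" "y \<notin> C"
  shows "\<exists>b \<in> Clop \<tau>. C \<subseteq> b \<and> y \<notin> b"
proof -
  have cs: "compact_space \<tau>" using assms(1) unfolding boolean_space_def by blast
  have "compactin \<tau> C" using closedin_compact_space[OF cs assms(2)] .
  moreover have "C \<subseteq> \<Union>{V \<in> Clop \<tau>. y \<notin> V}"
  proof
    fix z assume "z \<in> C"
    then have "z \<in> topspace \<tau>" "z \<noteq> y" using assms closedin_subset by auto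
    then show "z \<in> \<Union>{V \<in> Clop \<tau>. y \<notin> V}"
      using clop_sep_pt[OF assms(1) _ assms(3)] by blast
  qed
  ultimately obtain F where F: "finite F" "F \<subseteq> {V \<in> Clop \<tau>. y \<notin> V}" "C \<subseteq> \<Union>F"
    unfolding compactin_def by (metis (no_types, lifting) Clop_def mem_Collect_eq)
  have "\<Union>F \<in> Clop \<tau>"
    using F unfolding Clop_def by (auto intro!: closedin_Union openin_Union)
  then show ?thesis using F by blast
qed

lemma filter_fin_inter:
  assumes "is_filter X A F" "finite G" "G \<subseteq> F" "\<And>a b. a \<in> A \<Longrightarrow> b \<in> A \<Longrightarrow> a \<inter> b \<in> A"
  shows "X \<inter> \<Inter>G \<in> F"
  using assms(2,3)
proof (induction G rule: finite_induct)
  case empty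
  then show ?case using assms(1) unfolding is_filter_def by simp
next
  case (insert a G)
  then have "a \<inter> (X \<inter> \<Inter>G) \<in> F" using assms(1) unfolding is_filter_def by blast
  moreover have "a \<inter> (X \<inter> \<Inter>G) = X \<inter> \<Inter>(insert a G)" by auto
  ultimately show ?case by simp
qed

lemma clop_Int: "a \<in> Clop \<tau> \<Longrightarrow> b \<in> Clop \<tau> \<Longrightarrow> a \<inter> b \<in> Clop \<tau>"
  unfolding Clop_def by auto

lemma clop_top: "topspace \<tau> \<in> Clop \<tau>"
  unfolding Clop_def by auto

lemma clop_diff: "a \<in> Clop \<tau> \<Longrightarrow> topspace \<tau> - a \<in> Clop \<tau>"
  unfolding Clop_def by auto

lemma clop_empty: "{} \<in> Clop \<tau>"
  unfolding Clop_def by auto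

lemma eps_filter:
  assumes "x \<in> topspace \<tau>"
  shows "is_filter (topspace \<tau>) (Clop \<tau>) (eps \<tau> x)"
  using assms unfolding is_filter_def eps_def by (auto intro: clop_top clop_Int)

lemma eps_ultra:
  assumes "x \<in> topspace \<tau>"
  shows "is_ultrafilter (topspace \<tau>) (Clop \<tau>) (eps \<tau> x)"
proof -
  have ne: "eps \<tau> x \<noteq> Clop \<tau>" using clop_empty unfolding eps_def by blast
  have "G = eps \<tau> x" if G: "is_filter (topspace \<tau>) (Clop \<tau>) G" "G \<noteq> Clop \<tau>" "eps \<tau> x \<subseteq> G" for G
  proof
    show "G \<subseteq> eps \<tau> x"
    proof
      fix U assume U: "U \<in> G"
      then have UC: "U \<in> Clop \<tau>" using G unfolding is_filter_def by blast
      show "U \<in> eps \<tau> x"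
      proof (rule ccontr)
        assume "U \<notin> eps \<tau> x"
        then have "x \<notin> U" using UC unfolding eps_def by blast
        then have "topspace \<tau> - U \<in> G" using G(3) assms clop_diff[OF UC] unfolding eps_def by blast
        then have "U \<inter> (topspace \<tau> - U) \<in> G" using U G(1) unfolding is_filter_def by blast
        then have "{} \<in> G" by (simp add: Int_Diff)
        then have "Clop \<tau> \<subseteq> G" using G(1) unfolding is_filter_def by blast
        then show False using G unfolding is_filter_def by blast
      qed
    qed
  qed (use G in blast)
  then show ?thesis using eps_filter[OF assms] ne unfolding is_ultrafilter_def by blast
qed

lemma ultra_eps:
  assumes "boolean_space \<tau>" "is_ultrafilter (topspace \<tau>) (Clop \<tau>) u"
  shows "\<exists>x \<in> topspace \<tau>. u = eps \<tau> x"
proof -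
  have f: "is_filter (topspace \<tau>) (Clop \<tau>) u" and ne: "u \<noteq> Clop \<tau>"
    using assms(2) unfolding is_ultrafilter_def by auto
  have e: "{} \<notin> u"
  proof
    assume "{} \<in> u"
    then have "Clop \<tau> \<subseteq> u" using f unfolding is_filter_def by blast
    then show False using f ne unfolding is_filter_def by blast
  qed
  have cs: "compact_space \<tau>" using assms(1) unfolding boolean_space_def by blast
  have "\<Inter>u \<noteq> {}"
  proof (rule compact_space_fip[THEN iffD1, OF cs, rule_format], safe)
    fix C assume "C \<in> u" then show "closedin \<tau> C" using f unfolding is_filter_def Clop_def by blast
  next
    fix G assume G: "finite G" "G \<subseteq> u" "\<Inter>G = {}"
    have "topspace \<tau> \<inter> \<Inter>G \<in> u" using filter_fin_inter[OF f G(1,2)] clop_Int by blast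
    then show False using G(3) e by simp
  qed
  then obtain x where x: "x \<in> \<Inter>u" by blast
  then have xt: "x \<in> topspace \<tau>" using f unfolding is_filter_def by blast
  have "u \<subseteq> eps \<tau> x" using x f unfolding eps_def is_filter_def by blast
  moreover have "eps \<tau> x \<noteq> Clop \<tau>" using eps_ultra[OF xt] unfolding is_ultrafilter_def by blast
  ultimately have "eps \<tau> x = u" using assms(2) eps_filter[OF xt] unfolding is_ultrafilter_def by blast
  then show ?thesis using xt by blast
qed

lemma eps_inj:
  assumes "boolean_space \<tau>"
  shows "inj_on (eps \<tau>) (topspace \<tau>)"
proof
  fix x y assume xy: "x \<in> topspace \<tau>" "y \<in> topspace \<tau>" "eps \<tau> x = eps \<tau> y"
  show "x = y"
  proof (rule ccontr)
    assume "x \<noteq> y"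
    then obtain V where "V \<in> Clop \<tau>" "x \<in> V" "y \<notin> V" using clop_sep_pt[OF assms] xy by blast
    then show False using xy(3) unfolding eps_def by blast
  qed
qed

lemma eps_image:
  assumes "boolean_space \<tau>"
  shows "eps \<tau> ` topspace \<tau> = Ul (topspace \<tau>) (Clop \<tau>)"
proof
  show "eps \<tau> ` topspace \<tau> \<subseteq> Ul (topspace \<tau>) (Clop \<tau>)"
    using eps_ultra unfolding Ul_def by (auto simp: mem_Collect_eq)
  show "Ul (topspace \<tau>) (Clop \<tau>) \<subseteq> eps \<tau> ` topspace \<tau>"
  proof
    fix u assume "u \<in> Ul (topspace \<tau>) (Clop \<tau>)"
    then have "is_ultrafilter (topspace \<tau>) (Clop \<tau>) u" unfolding Ul_def by simp
    then obtain x where "x \<in> topspace \<tau>" "u = eps \<tau> x" using ultra_eps[OF assms] by blast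
    then show "u \<in> eps \<tau> ` topspace \<tau>" by blast
  qed
qed

lemma stone_topspace:
  "topspace (stone_topology X A) = \<Union>((\<lambda>a. {u \<in> Ul X A. a \<in> u}) ` A)"
  unfolding stone_topology_def by (rule topology_generated_by_topspace)

lemma homeo:
  assumes "boolean_space \<tau>"
  shows "homeomorphic_map \<tau> (stone_topology (topspace \<tau>) (Clop \<tau>)) (eps \<tau>)"
proof -
  let ?X = "topspace \<tau>"
  let ?B = "\<lambda>a. {u \<in> Ul ?X (Clop \<tau>). a \<in> u}"
  have ts: "topspace (stone_topology ?X (Clop \<tau>)) = Ul ?X (Clop \<tau>)"
  proof -
    have "u \<in> \<Union>(?B ` Clop \<tau>)" if "u \<in> Ul ?X (Clop \<tau>)" for u
    proof -
      have "?X \<in> u" using that unfolding Ul_def is_ultrafilter_def is_filter_def by simp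
      then show ?thesis using that clop_top by blast
    qed
    then show ?thesis unfolding stone_topspace by blast
  qed
  have img: "eps \<tau> ` ?X = Ul ?X (Clop \<tau>)" using eps_image[OF assms] .
  have pre: "eps \<tau> -` ?B a \<inter> ?X = a" if "a \<in> Clop \<tau>" for a
  proof -
    have "eps \<tau> x \<in> Ul ?X (Clop \<tau>)" if "x \<in> ?X" for x using img that by blast
    then show ?thesis using that clop_sub[OF that] unfolding eps_def by auto
  qed
  have cont: "continuous_map \<tau> (stone_topology ?X (Clop \<tau>)) (eps \<tau>)"
    unfolding stone_topology_def
  proof (rule continuous_on_generated_topo)
    fix U assume "U \<in> ?B ` Clop \<tau>"
    then obtain a where a: "a \<in> Clop \<tau>" "U = ?B a" by blast
    then show "openin \<tau> (eps \<tau> -` U \<inter> ?X)" using pre[OF a(1)] unfolding Clop_def by simp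
  next
    show "eps \<tau> ` ?X \<subseteq> \<Union> (?B ` Clop \<tau>)"
      using img ts unfolding stone_topspace by simp
  qed
  have om: "open_map \<tau> (stone_topology ?X (Clop \<tau>)) (eps \<tau>)"
    unfolding open_map_def
  proof (intro allI impI)
    fix U assume U: "openin \<tau> U"
    have "eps \<tau> ` U = \<Union>(?B ` {V \<in> Clop \<tau>. V \<subseteq> U})"
    proof
      show "eps \<tau> ` U \<subseteq> \<Union>(?B ` {V \<in> Clop \<tau>. V \<subseteq> U})"
      proof
        fix u assume "u \<in> eps \<tau> ` U"
        then obtain x where x: "x \<in> U" "u = eps \<tau> x" by blast
        obtain V where V: "V \<in> Clop \<tau>" "x \<in> V" "V \<subseteq> U" using clop_nbhd[OF assms U x(1)] by blast
        have "x \<in> ?X" using x U openin_subset by blast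
        then have "u \<in> Ul ?X (Clop \<tau>)" using img x by blast
        moreover have "V \<in> u" using V x unfolding eps_def by blast
        ultimately show "u \<in> \<Union>(?B ` {V \<in> Clop \<tau>. V \<subseteq> U})" using V by blast
      qed
    next
      show "\<Union>(?B ` {V \<in> Clop \<tau>. V \<subseteq> U}) \<subseteq> eps \<tau> ` U"
      proof
        fix u assume "u \<in> \<Union>(?B ` {V \<in> Clop \<tau>. V \<subseteq> U})"
        then obtain V where V: "V \<in> Clop \<tau>" "V \<subseteq> U" "u \<in> Ul ?X (Clop \<tau>)" "V \<in> u" by blast
        then obtain x where x: "x \<in> ?X" "u = eps \<tau> x" using img by blast
        then have "x \<in> V" using V unfolding eps_def by blast
        then show "u \<in> eps \<tau> ` U" using x V by blast
      qed
    qed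
    moreover have "openin (stone_topology ?X (Clop \<tau>)) (\<Union>(?B ` {V \<in> Clop \<tau>. V \<subseteq> U}))"
      unfolding stone_topology_def
      by (rule openin_Union) (auto intro: topology_generated_by_Basis)
    ultimately show "openin (stone_topology ?X (Clop \<tau>)) (eps \<tau> ` U)" by simp
  qed
  show ?thesis
    by (rule bijective_open_imp_homeomorphic_map[OF cont om]) (use img ts eps_inj[OF assms] in auto)
qed

lemma T_mono:
  assumes cs: "conditional_space \<tau> T" and W: "closedin \<tau> W" and a: "a \<in> Clop \<tau>" "W \<subseteq> a"
  shows "Tsec T x W \<subseteq> Tsec T x a"
proof
  fix y' assume "y' \<in> Tsec T x W"
  then have "T x W y'" unfolding Tsec_def by simp
  then have "T x a y'" using cs W a unfolding conditional_space_def by blast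
  then show "y' \<in> Tsec T x a" unfolding Tsec_def by simp
qed

lemma T_part:
  assumes cs: "conditional_space \<tau> T"
    and x: "x \<in> topspace \<tau>" and y: "y \<in> topspace \<tau>" and Z: "Z \<subseteq> topspace \<tau>"
  shows "T x Z y \<longleftrightarrow> T_alg (topspace \<tau>) (Clop \<tau>) (arrowT \<tau> T) (eps \<tau> x) (eps \<tau> ` Z) (eps \<tau> y)"
proof -
  let ?X = "topspace \<tau>"
  have bs: "boolean_space \<tau>" using cs unfolding conditional_space_def by blast
  have T3: "\<And>Y. closedin \<tau> Y \<Longrightarrow> T x Y y \<longleftrightarrow> (\<forall>U. U \<in> Clop \<tau> \<and> Y \<subseteq> U \<longrightarrow> T x U y)"
    using cs unfolding conditional_space_def by blast
  have img: "eps \<tau> ` ?X = Ul ?X (Clop \<tau>)" using eps_image[OF bs] .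
  have inj: "inj_on (eps \<tau>) ?X" using eps_inj[OF bs] .
  show ?thesis
  proof
    assume TZ: "T x Z y"
    have Zc: "closedin \<tau> Z" using TZ cs unfolding conditional_space_def by blast
    define F0 where "F0 = {U \<in> Clop \<tau>. Z \<subseteq> U}"
    have fF0: "is_filter ?X (Clop \<tau>) F0"
      unfolding is_filter_def F0_def using clop_top Z by (auto intro: clop_Int)
    have mem: "F0 \<subseteq> eps \<tau> w \<longleftrightarrow> w \<in> Z" if w: "w \<in> ?X" for w
    proof
      assume "F0 \<subseteq> eps \<tau> w"
      then have "\<forall>U \<in> Clop \<tau>. Z \<subseteq> U \<longrightarrow> w \<in> U" unfolding F0_def eps_def by blast
      then show "w \<in> Z" using clop_sep[OF bs Zc w] by blast
    next
      assume "w \<in> Z" then show "F0 \<subseteq> eps \<tau> w" unfolding F0_def eps_def by blast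
    qed
    have ph: "eps \<tau> ` Z = phi ?X (Clop \<tau>) F0"
    proof
      show "eps \<tau> ` Z \<subseteq> phi ?X (Clop \<tau>) F0"
      proof
        fix u assume "u \<in> eps \<tau> ` Z"
        then obtain w where w: "w \<in> Z" "u = eps \<tau> w" by blast
        then have "w \<in> ?X" using Z by blast
        then show "u \<in> phi ?X (Clop \<tau>) F0" using w mem img unfolding phi_def by blast
      qed
    next
      show "phi ?X (Clop \<tau>) F0 \<subseteq> eps \<tau> ` Z"
      proof
        fix u assume "u \<in> phi ?X (Clop \<tau>) F0"
        then have u: "u \<in> Ul ?X (Clop \<tau>)" "F0 \<subseteq> u" unfolding phi_def by auto
        then obtain w where w: "w \<in> ?X" "u = eps \<tau> w" using img by (metis imageE)
        then show "u \<in> eps \<tau> ` Z" using mem u by blast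
      qed
    qed
    have "Dto (Clop \<tau>) (arrowT \<tau> T) (eps \<tau> x) F0 \<subseteq> eps \<tau> y"
    proof
      fix b assume "b \<in> Dto (Clop \<tau>) (arrowT \<tau> T) (eps \<tau> x) F0"
      then obtain a where b: "b \<in> Clop \<tau>" and a: "a \<in> F0" "x \<in> arrowT \<tau> T a b"
        unfolding Dto_def eps_def by blast
      have aC: "a \<in> Clop \<tau>" "Z \<subseteq> a" using a unfolding F0_def by auto
      then have "closedin \<tau> a" unfolding Clop_def by simp
      then have "Tsec T x a \<subseteq> b" using a(2) unfolding arrowT_def by blast
      moreover have "T x a y" using T3[OF Zc] TZ aC by blast
      ultimately have "y \<in> b" unfolding Tsec_def by blast
      then show "b \<in> eps \<tau> y" using b unfolding eps_def by blast
    qed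
    then show "T_alg ?X (Clop \<tau>) (arrowT \<tau> T) (eps \<tau> x) (eps \<tau> ` Z) (eps \<tau> y)"
      unfolding T_alg_def using fF0 ph by blast
  next
    assume "T_alg ?X (Clop \<tau>) (arrowT \<tau> T) (eps \<tau> x) (eps \<tau> ` Z) (eps \<tau> y)"
    then obtain F where fF: "is_filter ?X (Clop \<tau>) F" and ph: "eps \<tau> ` Z = phi ?X (Clop \<tau>) F"
      and D: "Dto (Clop \<tau>) (arrowT \<tau> T) (eps \<tau> x) F \<subseteq> eps \<tau> y"
      unfolding T_alg_def by blast
    have FC: "F \<subseteq> Clop \<tau>" and XF: "?X \<in> F" using fF unfolding is_filter_def by auto
    have Zeq: "Z = \<Inter>F"
    proof
      show "Z \<subseteq> \<Inter>F"
      proof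
        fix z assume z: "z \<in> Z"
        then have "eps \<tau> z \<in> phi ?X (Clop \<tau>) F" using ph by blast
        then have "F \<subseteq> eps \<tau> z" unfolding phi_def by blast
        then show "z \<in> \<Inter>F" unfolding eps_def by blast
      qed
    next
      show "\<Inter>F \<subseteq> Z"
      proof
        fix w assume w: "w \<in> \<Inter>F"
        then have wX: "w \<in> ?X" using XF by blast
        have "F \<subseteq> eps \<tau> w" using w FC unfolding eps_def by blast
        moreover have "eps \<tau> w \<in> Ul ?X (Clop \<tau>)" using img wX by blast
        ultimately have "eps \<tau> w \<in> eps \<tau> ` Z" using ph unfolding phi_def by blast
        then obtain z where z: "z \<in> Z" "eps \<tau> w = eps \<tau> z" by blast
        then have "w = z" using inj wX Z by (meson inj_on_def subsetD)
        then show "w \<in> Z" using z by simp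
      qed
    qed
    have Zc: "closedin \<tau> Z" unfolding Zeq
      by (rule closedin_Inter) (use XF FC in \<open>auto simp: Clop_def\<close>)
    show "T x Z y"
    proof (rule ccontr)
      assume "\<not> T x Z y"
      then obtain a where a: "a \<in> Clop \<tau>" "Z \<subseteq> a" "\<not> T x a y" using T3[OF Zc] by blast
      have ac: "closedin \<tau> a" using a unfolding Clop_def by simp
      have aF: "a \<in> F"
      proof -
        have cpt: "compact_space \<tau>" using bs unfolding boolean_space_def by blast
        have "closedin \<tau> (?X - a)" using a unfolding Clop_def by auto
        then have "compactin \<tau> (?X - a)" using closedin_compact_space[OF cpt] by blast
        moreover have "(?X - a) \<inter> \<Inter>F = {}" using a(2) Zeq by blast
        moreover have "\<forall>C\<in>F. closedin \<tau> C" using FC unfolding Clop_def by blast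
        ultimately obtain G where G: "finite G" "G \<subseteq> F" "(?X - a) \<inter> \<Inter>G = {}"
          unfolding compactin_fip by blast
        have "?X \<inter> \<Inter>G \<in> F" using filter_fin_inter[OF fF G(1,2)] clop_Int by blast
        moreover have "?X \<inter> \<Inter>G \<subseteq> a" using G(3) by blast
        ultimately show "a \<in> F" using fF a(1) unfolding is_filter_def by blast
      qed
      have "closedin \<tau> (Tsec T x a)" using cs x ac unfolding conditional_space_def by blast
      moreover have "y \<notin> Tsec T x a" using a(3) unfolding Tsec_def by simp
      ultimately obtain b where b: "b \<in> Clop \<tau>" "Tsec T x a \<subseteq> b" "y \<notin> b"
        using clop_sep[OF bs _ y] by blast
      have "x \<in> arrowT \<tau> T a b"
        unfolding arrowT_def using x T_mono[OF cs _ a(1)] b(2) by blast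
      then have "b \<in> Dto (Clop \<tau>) (arrowT \<tau> T) (eps \<tau> x) F"
      proof -
        have "arrowT \<tau> T a b \<in> Clop \<tau>" using cs a(1) b(1) unfolding conditional_space_def by blast
        then have "arrowT \<tau> T a b \<in> eps \<tau> x" using \<open>x \<in> arrowT \<tau> T a b\<close> unfolding eps_def by blast
        then show ?thesis unfolding Dto_def using aF b(1) by blast
      qed
      then have "b \<in> eps \<tau> y" using D by blast
      then show False using b(3) unfolding eps_def by blast
    qed
  qed
qed

theorem theorem5p8:
  fixes \<tau> :: "'a topology" and T :: "'a \<Rightarrow> 'a set \<Rightarrow> 'a \<Rightarrow> bool"
  assumes "conditional_space \<tau> T"
  shows "homeomorphic_map \<tau> (stone_topology (topspace \<tau>) (Clop \<tau>)) (eps \<tau>)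
    \<and> (\<forall>x \<in> topspace \<tau>. \<forall>y \<in> topspace \<tau>. \<forall>Z. Z \<subseteq> topspace \<tau> \<longrightarrow>
         (T x Z y \<longleftrightarrow> T_alg (topspace \<tau>) (Clop \<tau>) (arrowT \<tau> T) (eps \<tau> x) (eps \<tau> ` Z) (eps \<tau> y)))"
proof -
  have bs: "boolean_space \<tau>" using assms unfolding conditional_space_def by blast
  show ?thesis using homeo[OF bs] T_part[OF assms] by blast
qed

end
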